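(* Let $R$ be a commutative ring and $E$ a set of $w\ge3$ distinct non-trivial idempotents of $R$ such that $eR$ is a maximal ideal of $R$ for every $e\in E$. Let $x=f_1f_2\cdots f_k$ and $y=b_1b_2\cdots b_j$ with $f_1,\dots,f_k,b_1,\dots,b_j\in E$ and $2\le k,j<w$. Then (1) $x\ne0$; (2) $x=y$ if and only if $\{f_1,\dots,f_k\}=\{b_1,\dots,b_j\}$.
   Context: Rings have $1\ne0$. An idempotent $e$ ($e^2=e$) is non-trivial if $e\ne0,1$. *)

theory Defs
  imports "HOL-Algebra.Ideal"
begin

end

theory Submission
  imports Defs
begin

lemma (in cring) idem_orth:
  assumes e: "e \<in> carrier R" and f: "f \<in> carrier R"
    and ee: "e \<otimes> e = e" and ff: "f \<otimes> f = f" and ne: "e \<noteq> f"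
    and me: "maximalideal (PIdl e) R" and mf: "maximalideal (PIdl f) R"
  shows "(\<one> \<ominus> e) \<otimes> (\<one> \<ominus> f) = \<zero>"
proof -
  have ue: "(\<one> \<ominus> e) \<otimes> e = \<zero>" using e ee
    by (simp add: minus_eq l_distr r_neg l_minus)
  have uf: "(\<one> \<ominus> f) \<otimes> f = \<zero>" using f ff
    by (simp add: minus_eq l_distr r_neg l_minus)
  have fnot: "f \<notin> PIdl e"
  proof
    assume "f \<in> PIdl e"
    then obtain r where r: "r \<in> carrier R" "f = r \<otimes> e" unfolding cgenideal_def by blast
    have fe: "f \<otimes> e = f" using r e ee by (simp add: m_assoc)
    have "PIdl f \<subseteq> PIdl e"
      using cgenideal_minimal[OF maximalideal.axioms(1)[OF me] \<open>f \<in> PIdl e\<close>] .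
    moreover have "PIdl e \<subseteq> carrier R"
      using maximalideal.axioms(1)[OF me] ideal.axioms(1) additive_subgroup.a_subset by blast
    ultimately have "PIdl e = PIdl f \<or> PIdl e = carrier R"
      using maximalideal.I_maximal[OF mf maximalideal.axioms(1)[OF me]] by blast
    moreover have "PIdl e \<noteq> carrier R" using maximalideal.I_notcarr[OF me] by auto
    ultimately have "e \<in> PIdl f" using cgenideal_self[OF e] by auto
    then obtain s where s: "s \<in> carrier R" "e = s \<otimes> f" unfolding cgenideal_def by blast
    have ef: "e \<otimes> f = e" using s f ff by (simp add: m_assoc)
    have "e = f" using ef fe m_comm[OF e f] by simp
    with ne show False by simp
  qed
  have Ie: "ideal (PIdl e) R" using maximalideal.axioms(1)[OF me] .
  have If: "ideal (PIdl f) R" using maximalideal.axioms(1)[OF mf] .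
  have sube: "PIdl e \<subseteq> carrier R"
    using Ie ideal.axioms(1) additive_subgroup.a_subset by blast
  have subf: "PIdl f \<subseteq> carrier R"
    using If ideal.axioms(1) additive_subgroup.a_subset by blast
  let ?J = "set_add R (PIdl e) (PIdl f)"
  have IJ: "ideal ?J R" using add_ideals[OF Ie If] .
  have z: "\<zero> \<in> PIdl f" using If additive_subgroup.zero_closed ideal.axioms(1) by blast
  have ze: "\<zero> \<in> PIdl e" using Ie additive_subgroup.zero_closed ideal.axioms(1) by blast
  have "PIdl e \<subseteq> ?J"
  proof
    fix x assume "x \<in> PIdl e"
    then have "x = x \<oplus> \<zero>" using sube by auto
    then show "x \<in> ?J" using \<open>x \<in> PIdl e\<close> z unfolding set_add_def' by blast
  qed
  moreover have "?J \<subseteq> carrier R"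
    using IJ ideal.axioms(1) additive_subgroup.a_subset by blast
  ultimately have "?J = PIdl e \<or> ?J = carrier R"
    using maximalideal.I_maximal[OF me IJ] by blast
  moreover have "f \<in> ?J"
  proof -
    have "f = \<zero> \<oplus> f" using f by simp
    then show ?thesis using ze cgenideal_self[OF f] unfolding set_add_def' by blast
  qed
  ultimately have "?J = carrier R" using fnot by auto
  then have "\<one> \<in> ?J" by simp
  then obtain a b where ab: "a \<in> PIdl e" "b \<in> PIdl f" "\<one> = a \<oplus> b"
    unfolding set_add_def' by blast
  obtain r where r: "r \<in> carrier R" "a = r \<otimes> e" using ab(1) unfolding cgenideal_def by blast
  obtain s where s: "s \<in> carrier R" "b = s \<otimes> f" using ab(2) unfolding cgenideal_def by blast
  have u1: "\<one> \<ominus> e \<in> carrier R" "\<one> \<ominus> f \<in> carrier R" using e f by auto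
  have h: "r \<otimes> e \<oplus> s \<otimes> f = \<one>" using ab r s by simp
  have "(\<one> \<ominus> e) \<otimes> (\<one> \<ominus> f) = (\<one> \<ominus> e) \<otimes> (\<one> \<ominus> f) \<otimes> (r \<otimes> e \<oplus> s \<otimes> f)"
    unfolding h using u1 by simp
  also have "\<dots> = r \<otimes> (\<one> \<ominus> f) \<otimes> ((\<one> \<ominus> e) \<otimes> e) \<oplus> s \<otimes> (\<one> \<ominus> e) \<otimes> ((\<one> \<ominus> f) \<otimes> f)"
    using u1 r s e f by (simp add: r_distr m_ac)
  also have "\<dots> = \<zero>" using ue uf u1 r s by simp
  finally show ?thesis .
qed

lemma (in cring) foldr_carr:
  "set l \<subseteq> carrier R \<Longrightarrow> foldr (\<lambda>a b. a \<otimes> b) l \<one> \<in> carrier R"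
  by (induction l) auto

lemma (in cring) foldr_key:
  assumes E: "E \<subseteq> carrier R"
    and orth: "\<And>a e. a \<in> E \<Longrightarrow> e \<in> E \<Longrightarrow> a \<noteq> e \<Longrightarrow> (\<one> \<ominus> a) \<otimes> (\<one> \<ominus> e) = \<zero>"
    and idem: "\<And>e. e \<in> E \<Longrightarrow> e \<otimes> e = e"
    and eE: "e \<in> E"
  shows "set l \<subseteq> E \<Longrightarrow> foldr (\<lambda>a b. a \<otimes> b) l \<one> \<otimes> (\<one> \<ominus> e) = (if e \<in> set l then \<zero> else \<one> \<ominus> e)"
proof (induction l)
  case Nil
  then show ?case using eE E by auto
next
  case (Cons a l)
  have a: "a \<in> E" "a \<in> carrier R" using Cons E by auto
  have ec: "e \<in> carrier R" using eE E by auto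
  have F: "foldr (\<lambda>a b. a \<otimes> b) l \<one> \<in> carrier R" using foldr_carr Cons E by auto
  have IH: "foldr (\<lambda>a b. a \<otimes> b) l \<one> \<otimes> (\<one> \<ominus> e) = (if e \<in> set l then \<zero> else \<one> \<ominus> e)"
    using Cons by auto
  have "foldr (\<lambda>a b. a \<otimes> b) (a # l) \<one> \<otimes> (\<one> \<ominus> e) = a \<otimes> (foldr (\<lambda>a b. a \<otimes> b) l \<one> \<otimes> (\<one> \<ominus> e))"
    using a F ec by (simp add: m_assoc)
  also have "\<dots> = (if e \<in> set (a # l) then \<zero> else \<one> \<ominus> e)"
  proof (cases "e \<in> set l")
    case True
    then show ?thesis using IH a by simp
  next
    case False
    have ae: "a \<otimes> (\<one> \<ominus> e) = \<one> \<ominus> e \<ominus> (\<one> \<ominus> a) \<otimes> (\<one> \<ominus> e)"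
    proof -
      have "a \<otimes> (\<one> \<ominus> e) \<oplus> (\<one> \<ominus> a) \<otimes> (\<one> \<ominus> e) = \<one> \<ominus> e"
        using a ec by algebra
      then show ?thesis using a ec by algebra
    qed
    show ?thesis
    proof (cases "a = e")
      case True
      have "e \<otimes> (\<one> \<ominus> e) = \<zero>" using ec idem[OF eE]
        by (simp add: minus_eq r_distr r_neg r_minus)
      then show ?thesis using IH False True by simp
    next
      case False2: False
      then show ?thesis using IH False ae orth[OF a(1) eE False2] ec by (simp add: minus_eq)
    qed
  qed
  finally show ?case .
qed

lemma (in cring) foldr_absorb:
  assumes idem: "\<And>e. e \<in> set l \<Longrightarrow> e \<otimes> e = e" and C: "set l \<subseteq> carrier R"
  shows "x \<in> set l \<Longrightarrow> x \<otimes> foldr (\<lambda>a b. a \<otimes> b) l \<one> = foldr (\<lambda>a b. a \<otimes> b) l \<one>"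
  using idem C
proof (induction l)
  case Nil then show ?case by simp
next
  case (Cons a l)
  have F: "foldr (\<lambda>a b. a \<otimes> b) l \<one> \<in> carrier R" using foldr_carr Cons by auto
  show ?case
  proof (cases "x = a")
    case True
    then show ?thesis using Cons F by (simp add: m_assoc[symmetric])
  next
    case False
    then have "x \<otimes> foldr (\<lambda>a b. a \<otimes> b) l \<one> = foldr (\<lambda>a b. a \<otimes> b) l \<one>" using Cons by auto
    have xc: "x \<in> carrier R" using Cons by auto
    then show ?thesis using Cons F \<open>x \<otimes> foldr (\<lambda>a b. a \<otimes> b) l \<one> = foldr (\<lambda>a b. a \<otimes> b) l \<one>\<close>
      by (simp add: m_lcomm[OF xc])
  qed
qed

lemma (in cring) foldr_sub:
  assumes idem: "\<And>e. e \<in> set m \<Longrightarrow> e \<otimes> e = e" and C: "set m \<subseteq> carrier R"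
  shows "set l \<subseteq> set m \<Longrightarrow> foldr (\<lambda>a b. a \<otimes> b) l \<one> \<otimes> foldr (\<lambda>a b. a \<otimes> b) m \<one> = foldr (\<lambda>a b. a \<otimes> b) m \<one>"
proof (induction l)
  case Nil then show ?case using foldr_carr C by simp
next
  case (Cons a l)
  have F: "foldr (\<lambda>a b. a \<otimes> b) l \<one> \<in> carrier R" using foldr_carr Cons C by auto
  have G: "foldr (\<lambda>a b. a \<otimes> b) m \<one> \<in> carrier R" using foldr_carr C by auto
  have a: "a \<in> set m" "a \<in> carrier R" using Cons C by auto
  have "foldr (\<lambda>a b. a \<otimes> b) (a # l) \<one> \<otimes> foldr (\<lambda>a b. a \<otimes> b) m \<one>
     = a \<otimes> (foldr (\<lambda>a b. a \<otimes> b) l \<one> \<otimes> foldr (\<lambda>a b. a \<otimes> b) m \<one>)"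
    using F G a by (simp add: m_assoc)
  also have "\<dots> = foldr (\<lambda>a b. a \<otimes> b) m \<one>"
    using Cons foldr_absorb[OF idem C a(1)] by auto
  finally show ?case .
qed

theorem lemma3p20:
  fixes R (structure) and E :: "'a set" and w :: nat
    and fs bs :: "'a list"
  assumes "cring R"
    and "\<one>\<^bsub>R\<^esub> \<noteq> \<zero>\<^bsub>R\<^esub>"
    and "E \<subseteq> carrier R" and "finite E" and "card E = w" and "w \<ge> 3"
    and "\<And>e. e \<in> E \<Longrightarrow> e \<otimes>\<^bsub>R\<^esub> e = e \<and> e \<noteq> \<zero>\<^bsub>R\<^esub> \<and> e \<noteq> \<one>\<^bsub>R\<^esub>"
    and "\<And>e. e \<in> E \<Longrightarrow> maximalideal (PIdl\<^bsub>R\<^esub> e) R"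
    and "set fs \<subseteq> E" and "2 \<le> length fs" and "length fs < w"
    and "set bs \<subseteq> E" and "2 \<le> length bs" and "length bs < w"
  shows "foldr (\<lambda>a b. a \<otimes>\<^bsub>R\<^esub> b) fs \<one>\<^bsub>R\<^esub> \<noteq> \<zero>\<^bsub>R\<^esub>
    \<and> (foldr (\<lambda>a b. a \<otimes>\<^bsub>R\<^esub> b) fs \<one>\<^bsub>R\<^esub> = foldr (\<lambda>a b. a \<otimes>\<^bsub>R\<^esub> b) bs \<one>\<^bsub>R\<^esub>
         \<longleftrightarrow> set fs = set bs)"
proof -
  interpret cring R by fact
  let ?F = "\<lambda>l. foldr (\<lambda>a b. a \<otimes> b) l \<one>"
  have orth: "\<And>a e. a \<in> E \<Longrightarrow> e \<in> E \<Longrightarrow> a \<noteq> e \<Longrightarrow> (\<one> \<ominus> a) \<otimes> (\<one> \<ominus> e) = \<zero>"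
    using idem_orth assms(3,7,8) by blast
  have idem: "\<And>e. e \<in> E \<Longrightarrow> e \<otimes> e = e" using assms(7) by blast
  have key: "\<And>l e. set l \<subseteq> E \<Longrightarrow> e \<in> E \<Longrightarrow> ?F l \<otimes> (\<one> \<ominus> e) = (if e \<in> set l then \<zero> else \<one> \<ominus> e)"
    using foldr_key[OF assms(3) orth idem] by blast
  have unz: "\<And>e. e \<in> E \<Longrightarrow> \<one> \<ominus> e \<noteq> \<zero>"
  proof
    fix e assume e: "e \<in> E" "\<one> \<ominus> e = \<zero>"
    then have "e \<in> carrier R" using assms(3) by auto
    then have "e = \<one> \<ominus> (\<one> \<ominus> e)" by algebra
    then have "e = \<one>" using e(2) by (simp add: minus_eq)
    then show False using assms(7)[OF e(1)] by simp
  qed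
  have cardlt: "card (set fs) < card E" using card_length[of fs] assms(5,11) by linarith
  then obtain e where e: "e \<in> E" "e \<notin> set fs"
  proof -
    have "\<not> E \<subseteq> set fs" using card_mono[OF List.finite_set, of E fs] cardlt by linarith
    then show ?thesis using that by blast
  qed
  have P1: "?F fs \<noteq> \<zero>"
  proof
    assume "?F fs = \<zero>"
    then have "?F fs \<otimes> (\<one> \<ominus> e) = \<zero>" using e assms(3) by auto
    then show False using key[OF assms(9) e(1)] e unz[OF e(1)] by simp
  qed
  have P2: "?F fs = ?F bs \<longleftrightarrow> set fs = set bs"
  proof
    assume eq: "?F fs = ?F bs"
    have "\<And>x. x \<in> set fs \<longleftrightarrow> x \<in> set bs"
    proof -
      fix x
      show "x \<in> set fs \<longleftrightarrow> x \<in> set bs"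
      proof (cases "x \<in> E")
        case True
        then show ?thesis using key[OF assms(9) True] key[OF assms(12) True] eq unz[OF True]
          by (metis)
      next
        case False
        then show ?thesis using assms(9,12) by auto
      qed
    qed
    then show "set fs = set bs" by blast
  next
    assume eq: "set fs = set bs"
    have Cf: "set fs \<subseteq> carrier R" and Cb: "set bs \<subseteq> carrier R" using assms(3,9,12) by auto
    have If: "\<And>e. e \<in> set fs \<Longrightarrow> e \<otimes> e = e" and Ib: "\<And>e. e \<in> set bs \<Longrightarrow> e \<otimes> e = e"
      using idem assms(9,12) by auto
    have "?F fs \<otimes> ?F bs = ?F bs" using foldr_sub[OF Ib Cb] eq by simp
    moreover have "?F bs \<otimes> ?F fs = ?F fs" using foldr_sub[OF If Cf] eq by simp
    ultimately show "?F fs = ?F bs"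
      using m_comm[OF foldr_carr[OF Cf] foldr_carr[OF Cb]] by simp
  qed
  show ?thesis using P1 P2 by simp
qed

end
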